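(* Let $(X,d)$ be a metric space. Then every isometric embedding $f\colon X\to X$ (a not necessarily surjective distance-preserving map) has the same coarse entropy; that is, $h_\infty(f)=h_\infty(\mathrm{id}_X)$ for every isometric embedding $f\colon X\to X$.
   Context: Let $(X,d)$ be a metric space and $f\colon X\to X$ a map. For $\delta>0$, $n\in\mathbb N$ and $x_0\in X$, a $\delta$-pseudoorbit of $f$ of length $n$ starting at $x_0$ is a sequence $(x_0,x_1,\dots,x_n)$ of points of $X$ with $d(f(x_i),x_{i+1})\le\delta$ for $i=0,\dots,n-1$. Let $P(f,n,\delta,x_0)$ be the set of all such sequences, with the distance between $(x_i)$ and $(y_i)$ given by $\max_{0\le i\le n}d(x_i,y_i)$. A set is $R$-separated if any two distinct elements are at distance at least $R$. Let $s(f,n,R,\delta,x_0)$ be the supremum of cardinalities of $R$-separated subsets of $P(f,n,\delta,x_0)$. The coarse entropy of $f$ is $h_\infty(f)=\lim_{\delta\to\infty}\lim_{R\to\infty}\limsup_{n\to\infty}\frac1n\log s(f,n,R,\delta,x_0)\in[0,\infty]$, which does not depend on $x_0$. *)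

theory Defs
  imports "HOL-Analysis.Analysis" "HOL-Library.Liminf_Limsup"
begin

definition pseudo_orbits :: "('a::metric_space \<Rightarrow> 'a) \<Rightarrow> nat \<Rightarrow> real \<Rightarrow> 'a \<Rightarrow> 'a list set" where
  "pseudo_orbits f n \<delta> x0 =
     {xs. length xs = Suc n \<and> xs ! 0 = x0 \<and> (\<forall>i<n. dist (f (xs ! i)) (xs ! Suc i) \<le> \<delta>)}"

definition seq_dist :: "nat \<Rightarrow> 'a::metric_space list \<Rightarrow> 'a list \<Rightarrow> real" where
  "seq_dist n xs ys = Max ((\<lambda>i. dist (xs ! i) (ys ! i)) ` {0..n})"

definition separated :: "nat \<Rightarrow> real \<Rightarrow> 'a::metric_space list set \<Rightarrow> bool" where
  "separated n R S \<longleftrightarrow> (\<forall>xs\<in>S. \<forall>ys\<in>S. xs \<noteq> ys \<longrightarrow> seq_dist n xs ys \<ge> R)"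

definition sep_number :: "('a::metric_space \<Rightarrow> 'a) \<Rightarrow> nat \<Rightarrow> real \<Rightarrow> real \<Rightarrow> 'a \<Rightarrow> ereal" where
  "sep_number f n R \<delta> x0 =
     (SUP S \<in> {S. finite S \<and> S \<subseteq> pseudo_orbits f n \<delta> x0 \<and> separated n R S}. ereal (real (card S)))"

definition elog :: "ereal \<Rightarrow> ereal" where
  "elog s = (if s = \<infinity> then \<infinity> else ereal (ln (real_of_ereal s)))"

definition coarse_entropy :: "('a::metric_space \<Rightarrow> 'a) \<Rightarrow> 'a \<Rightarrow> ereal" where
  "coarse_entropy f x0 =
     Lim at_top (\<lambda>\<delta>::real. Lim at_top (\<lambda>R::real.
        limsup (\<lambda>n. ereal (1 / real n) * elog (sep_number f n R \<delta> x0))))"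

end

theory Submission
  imports Defs
begin

lemma seq_dist_ge:
  assumes "i \<le> n" shows "dist (xs ! i) (ys ! i) \<le> seq_dist n xs ys"
  unfolding seq_dist_def using assms by (intro Max_ge) auto

lemma seq_dist_le:
  assumes "\<And>i. i \<le> n \<Longrightarrow> dist (xs ! i) (ys ! i) \<le> t" shows "seq_dist n xs ys \<le> t"
  unfolding seq_dist_def using assms by (subst Max_le_iff) auto

definition sn :: "'a::metric_space list set \<Rightarrow> nat \<Rightarrow> real \<Rightarrow> ereal" where
  "sn P n R = (SUP S \<in> {S. finite S \<and> S \<subseteq> P \<and> separated n R S}. ereal (real (card S)))"

lemma sep_number_sn: "sep_number f n R \<delta> x0 = sn (pseudo_orbits f n \<delta> x0) n R"
  unfolding sep_number_def sn_def ..

lemma sn_map: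
  assumes PQ: "\<And>xs. xs \<in> P \<Longrightarrow> \<Phi> xs \<in> Q"
    and len: "\<And>xs. xs \<in> P \<Longrightarrow> length xs = Suc n"
    and d: "\<And>xs ys. xs \<in> P \<Longrightarrow> ys \<in> P \<Longrightarrow> seq_dist n xs ys \<le> seq_dist n' (\<Phi> xs) (\<Phi> ys)"
  shows "sn P n R \<le> sn Q n' R"
  unfolding sn_def
proof (rule SUP_mono)
  fix S assume S: "S \<in> {S. finite S \<and> S \<subseteq> P \<and> separated n R S}"
  have inj: "inj_on \<Phi> S"
  proof (rule inj_onI)
    fix xs ys assume xs: "xs \<in> S" and ys: "ys \<in> S" and eq: "\<Phi> xs = \<Phi> ys"
    have "seq_dist n' (\<Phi> xs) (\<Phi> ys) = 0" unfolding eq seq_dist_def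
      by (simp add: image_constant_conv)
    hence le: "seq_dist n xs ys \<le> 0" using d xs ys S by fastforce
    have "xs ! i = ys ! i" if "i < length xs" for i
    proof -
      have "i \<le> n" using that len xs S by fastforce
      hence "dist (xs ! i) (ys ! i) \<le> 0" using seq_dist_ge[of i n xs ys] le by linarith
      thus ?thesis by simp
    qed
    moreover have "xs \<in> P" "ys \<in> P" using xs ys S by auto
    hence "length xs = length ys" using len by simp
    ultimately show "xs = ys" by (simp add: nth_equalityI)
  qed
  have "separated n' R (\<Phi> ` S)" unfolding separated_def
  proof (intro ballI impI)
    fix a b assume "a \<in> \<Phi> ` S" "b \<in> \<Phi> ` S" "a \<noteq> b"
    then obtain xs ys where xs: "xs \<in> S" and ys: "ys \<in> S" and a: "a = \<Phi> xs" and b: "b = \<Phi> ys"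
      by blast
    have "xs \<noteq> ys" using \<open>a \<noteq> b\<close> a b by blast
    hence "R \<le> seq_dist n xs ys" using S xs ys unfolding separated_def by blast
    also have "\<dots> \<le> seq_dist n' a b" using d xs ys S a b by blast
    finally show "R \<le> seq_dist n' a b" .
  qed
  hence "\<Phi> ` S \<in> {S. finite S \<and> S \<subseteq> Q \<and> separated n' R S}"
    using S PQ by blast
  moreover have "card (\<Phi> ` S) = card S" using inj by (simp add: card_image)
  ultimately show "\<exists>m\<in>{S. finite S \<and> S \<subseteq> Q \<and> separated n' R S}. ereal (real (card S)) \<le> ereal (real (card m))"
    by (metis order_refl)
qed

lemma sn_ge0: "0 \<le> sn P n R"
  unfolding sn_def
  by (rule SUP_upper2[of "{}"]) (auto simp: separated_def)

lemma sn_cases: "sn P n R = 0 \<or> 1 \<le> sn P n R"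
proof (cases "\<exists>S\<in>{S. finite S \<and> S \<subseteq> P \<and> separated n R S}. S \<noteq> {}")
  case True
  then obtain S where S: "S \<in> {S. finite S \<and> S \<subseteq> P \<and> separated n R S}" "S \<noteq> {}" by blast
  hence "card S \<ge> 1" by (simp add: Suc_leI card_gt_0_iff)
  hence "(1::ereal) \<le> ereal (real (card S))" by simp
  also have "\<dots> \<le> sn P n R" unfolding sn_def using S(1) by (rule SUP_upper)
  finally show ?thesis by simp
next
  case False
  hence "sn P n R \<le> 0" unfolding sn_def by (intro SUP_least) auto
  thus ?thesis using sn_ge0[of P n R] by simp
qed

lemma sn_mono_R: "R \<le> R' \<Longrightarrow> sn P n R' \<le> sn P n R"
  unfolding sn_def by (rule SUP_subset_mono) (auto simp: separated_def intro: order_trans)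

lemma sn_mono_P: "P \<subseteq> P' \<Longrightarrow> sn P n R \<le> sn P' n R"
  unfolding sn_def by (rule SUP_subset_mono) auto

lemma elog_ge0: "0 \<le> elog (sn P n R)"
  using sn_cases[of P n R] unfolding elog_def
  by (cases "sn P n R") auto

lemma elog_mono:
  assumes "sn P n R \<le> sn P' n' R'"
  shows "elog (sn P n R) \<le> elog (sn P' n' R')"
proof -
  consider "sn P n R = 0" | "1 \<le> sn P n R" using sn_cases by blast
  then show ?thesis
  proof cases
    case 1
    have "0 \<le> elog (sn P' n' R')" by (rule elog_ge0)
    have "elog 0 = 0" by (simp add: elog_def)
    then show ?thesis using 1 \<open>0 \<le> elog (sn P' n' R')\<close> by simp
  next
    case 2
    hence 3: "1 \<le> sn P' n' R'" using assms by simp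
    show ?thesis
    proof (cases "sn P' n' R' = \<infinity>")
      case True then show ?thesis by (simp add: elog_def)
    next
      case False
      then obtain b where b: "sn P' n' R' = ereal b" using 3 by (cases "sn P' n' R'") auto
      then obtain a where a: "sn P n R = ereal a" using assms 2 by (cases "sn P n R") auto
      show ?thesis using a b assms 2 by (simp add: elog_def)
    qed
  qed
qed

lemma Lim_antimono:
  fixes g :: "real \<Rightarrow> ereal"
  assumes "\<And>x y. x \<le> y \<Longrightarrow> g y \<le> g x"
  shows "Lim at_top g = (INF x. g x)"
proof (rule tendsto_Lim)
  show "\<not> trivial_limit (at_top :: real filter)" by simp
  show "(g \<longlongrightarrow> (INF x. g x)) at_top"
  proof (rule order_tendstoI)
    fix a assume "a < (INF x. g x)"
    hence "\<And>x. a < g x" using INF_lower[of _ UNIV g] by (meson UNIV_I less_le_trans)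
    thus "\<forall>\<^sub>F x in at_top. a < g x" by simp
  next
    fix a assume "(INF x. g x) < a"
    then obtain x where "g x < a" by (auto simp: INF_less_iff)
    thus "\<forall>\<^sub>F y in at_top. g y < a" unfolding eventually_at_top_linorder
      using assms by (meson le_less_trans)
  qed
qed

lemma Lim_mono:
  fixes g :: "real \<Rightarrow> ereal"
  assumes "\<And>x y. x \<le> y \<Longrightarrow> g x \<le> g y"
  shows "Lim at_top g = (SUP x. g x)"
proof (rule tendsto_Lim)
  show "\<not> trivial_limit (at_top :: real filter)" by simp
  show "(g \<longlongrightarrow> (SUP x. g x)) at_top"
  proof (rule order_tendstoI)
    fix a assume "(SUP x. g x) > a"
    then obtain x where "g x > a" by (auto simp: less_SUP_iff)
    thus "\<forall>\<^sub>F y in at_top. a < g y" unfolding eventually_at_top_linorder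
      using assms by (meson less_le_trans)
  next
    fix a assume "(SUP x. g x) < a"
    hence "\<And>x. g x < a" using SUP_upper[of _ UNIV g] by (meson UNIV_I le_less_trans)
    thus "\<forall>\<^sub>F x in at_top. g x < a" by simp
  qed
qed

definition A :: "('a::metric_space \<Rightarrow> 'a) \<Rightarrow> 'a \<Rightarrow> real \<Rightarrow> real \<Rightarrow> ereal" where
  "A f x0 \<delta> R = limsup (\<lambda>n. ereal (1 / real n) * elog (sep_number f n R \<delta> x0))"

lemma A_anti_R:
  assumes "R \<le> R'" shows "A f x0 \<delta> R' \<le> A f x0 \<delta> R"
  unfolding A_def sep_number_sn
  by (intro Limsup_mono always_eventually allI ereal_mult_left_mono elog_mono sn_mono_R assms) auto

lemma pseudo_orbits_mono: "\<delta> \<le> \<delta>' \<Longrightarrow> pseudo_orbits f n \<delta> x0 \<subseteq> pseudo_orbits f n \<delta>' x0"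
  unfolding pseudo_orbits_def by force

lemma A_mono_d:
  assumes "\<delta> \<le> \<delta>'" shows "A f x0 \<delta> R \<le> A f x0 \<delta>' R"
  unfolding A_def sep_number_sn
  by (intro Limsup_mono always_eventually allI ereal_mult_left_mono elog_mono sn_mono_P
       pseudo_orbits_mono assms) auto

lemma ce_eq: "coarse_entropy f x0 = (SUP \<delta>. INF R. A f x0 \<delta> R)"
proof -
  have 1: "Lim at_top (\<lambda>R. A f x0 \<delta> R) = (INF R. A f x0 \<delta> R)" for \<delta>
    by (rule Lim_antimono) (rule A_anti_R)
  have "coarse_entropy f x0 = Lim at_top (\<lambda>\<delta>. INF R. A f x0 \<delta> R)"
    unfolding coarse_entropy_def 1[symmetric] unfolding A_def ..
  also have "\<dots> = (SUP \<delta>. INF R. A f x0 \<delta> R)"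
    by (rule Lim_mono) (intro INF_mono, metis A_mono_d order_refl)
  finally show ?thesis .
qed

lemma iso_pow:
  fixes f :: "'a::metric_space \<Rightarrow> 'a"
  assumes iso: "\<forall>x y. dist (f x) (f y) = dist x y"
  shows "dist ((f^^i) x) ((f^^i) y) = dist x y"
proof (induction i)
  case (Suc i)
  have "dist ((f^^Suc i) x) ((f^^Suc i) y) = dist (f ((f^^i) x)) (f ((f^^i) y))"
    by simp
  also have "\<dots> = dist ((f^^i) x) ((f^^i) y)" using iso by blast
  finally have "dist ((f^^Suc i) x) ((f^^Suc i) y) = dist ((f^^i) x) ((f^^i) y)" .
  then show ?case using Suc by simp
qed simp

lemma sn_id_le_f:
  assumes iso: "\<forall>x y. dist (f x) (f y) = dist x y"
  shows "sep_number id n R \<delta> x0 \<le> sep_number f n R \<delta> x0"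
  unfolding sep_number_sn
proof (rule sn_map[where \<Phi> = "\<lambda>xs. map (\<lambda>i. (f^^i) (xs!i)) [0..<Suc n]"])
  fix xs assume xs: "xs \<in> pseudo_orbits id n \<delta> x0"
  thus "length xs = Suc n" by (simp add: pseudo_orbits_def)
  show "map (\<lambda>i. (f^^i) (xs!i)) [0..<Suc n] \<in> pseudo_orbits f n \<delta> x0"
    unfolding pseudo_orbits_def
  proof (intro CollectI conjI allI impI)
    fix i assume i: "i < n"
    have "dist (f ((f^^i) (xs!i))) ((f^^Suc i) (xs!Suc i)) = dist ((f^^Suc i) (xs!i)) ((f^^Suc i) (xs!Suc i))"
      by (simp add: funpow_swap1)
    also have "\<dots> = dist (xs!i) (xs!Suc i)" by (rule iso_pow[OF iso])
    also have "\<dots> \<le> \<delta>" using xs i by (simp add: pseudo_orbits_def)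
    finally show "dist (f (map (\<lambda>i. (f ^^ i) (xs ! i)) [0..<Suc n] ! i))
          (map (\<lambda>i. (f ^^ i) (xs ! i)) [0..<Suc n] ! Suc i) \<le> \<delta>"
      using i by (simp del: upt_Suc)
  qed (use xs in \<open>auto simp: pseudo_orbits_def simp del: upt_Suc\<close>)
next
  fix xs ys
  show "seq_dist n xs ys \<le> seq_dist n (map (\<lambda>i. (f^^i) (xs!i)) [0..<Suc n]) (map (\<lambda>i. (f^^i) (ys!i)) [0..<Suc n])"
  proof (rule seq_dist_le)
    fix i assume i: "i \<le> n"
    have "dist (xs!i) (ys!i) = dist (map (\<lambda>i. (f^^i) (xs!i)) [0..<Suc n] ! i) (map (\<lambda>i. (f^^i) (ys!i)) [0..<Suc n] ! i)"
      using i by (simp add: iso_pow[OF iso] del: upt_Suc)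
    also have "\<dots> \<le> seq_dist n (map (\<lambda>i. (f^^i) (xs!i)) [0..<Suc n]) (map (\<lambda>i. (f^^i) (ys!i)) [0..<Suc n])" by (rule seq_dist_ge[OF i])
    finally show "dist (xs!i) (ys!i) \<le> seq_dist n (map (\<lambda>i. (f^^i) (xs!i)) [0..<Suc n]) (map (\<lambda>i. (f^^i) (ys!i)) [0..<Suc n])" .
  qed
qed

lemma ce_id_le_f:
  assumes iso: "\<forall>x y. dist (f x) (f y) = dist x y"
  shows "coarse_entropy id x0 \<le> coarse_entropy f x0"
  unfolding ce_eq
proof (intro SUP_mono' INF_mono')
  fix \<delta> R
  show "A id x0 \<delta> R \<le> A f x0 \<delta> R"
    unfolding A_def sep_number_sn
    by (intro Limsup_mono always_eventually allI ereal_mult_left_mono elog_mono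
         sn_id_le_f[OF iso, unfolded sep_number_sn]) auto
qed

lemma orbit_dist:
  fixes f :: "'a::metric_space \<Rightarrow> 'a"
  assumes iso: "\<forall>x y. dist (f x) (f y) = dist x y"
  shows "dist ((f^^a) x0) ((f^^(a+m)) x0) \<le> real m * dist x0 (f x0)"
proof -
  have "dist ((f^^a) x0) ((f^^(a+m)) x0) = dist ((f^^a) x0) ((f^^a) ((f^^m) x0))"
    by (simp add: funpow_add)
  also have "\<dots> = dist x0 ((f^^m) x0)" by (rule iso_pow[OF iso])
  also have "\<dots> \<le> real m * dist x0 (f x0)"
  proof (induction m)
    case (Suc m)
    have "dist x0 ((f^^Suc m) x0) \<le> dist x0 (f x0) + dist (f x0) (f ((f^^m) x0))"
      by (simp add: dist_triangle)
    also have "dist (f x0) (f ((f^^m) x0)) = dist x0 ((f^^m) x0)" using iso by blast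
    finally show ?case using Suc by (simp add: algebra_simps)
  qed simp
  finally show ?thesis .
qed

lemma sn_f_le_id:
  fixes f :: "'a::metric_space \<Rightarrow> 'a"
  assumes iso: "\<forall>x y. dist (f x) (f y) = dist x y"
    and k: "k \<ge> 1" and kd: "real k * dist x0 (f x0) \<le> \<delta>"
  shows "sep_number f n R \<delta> x0 \<le> sep_number id (n + (n div k + 1)) R \<delta> x0"
  unfolding sep_number_sn
proof -
  define q where "q = n div k + 1"
  define c where "c = dist x0 (f x0)"
  have c0: "c \<ge> 0" unfolding c_def by simp
  define g where "g ys j = (if j < q then (f^^(j*k)) x0 else (f^^(n-(j-q))) (ys!(j-q)))" for ys j
  have "sn (pseudo_orbits f n \<delta> x0) n R \<le> sn (pseudo_orbits id (n+q) \<delta> x0) (n+q) R"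
  proof (rule sn_map[where \<Phi> = "\<lambda>ys. map (g ys) [0..<Suc (n+q)]"])
    fix ys assume ys: "ys \<in> pseudo_orbits f n \<delta> x0"
    thus "length ys = Suc n" by (simp add: pseudo_orbits_def)
    have ys0: "ys ! 0 = x0" and ysd: "\<And>i. i < n \<Longrightarrow> dist (f (ys!i)) (ys!Suc i) \<le> \<delta>"
      using ys by (auto simp: pseudo_orbits_def)
    show "map (g ys) [0..<Suc (n+q)] \<in> pseudo_orbits id (n+q) \<delta> x0"
      unfolding pseudo_orbits_def
    proof (intro CollectI conjI allI impI)
      show "map (g ys) [0..<Suc (n + q)] ! 0 = x0"
        by (simp add: g_def q_def del: upt_Suc)
      fix j assume j: "j < n + q"
      have "dist (g ys j) (g ys (Suc j)) \<le> \<delta>"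
      proof -
        consider "Suc j < q" | "Suc j = q" | "q \<le> j" by linarith
        then show ?thesis
        proof cases
          case 1
          have "dist (g ys j) (g ys (Suc j)) = dist ((f^^(j*k)) x0) ((f^^(j*k+k)) x0)"
            using 1 by (simp add: g_def add.commute)
          also have "\<dots> \<le> real k * c" unfolding c_def by (rule orbit_dist[OF iso])
          finally show ?thesis using kd c_def by simp
        next
          case 2
          hence jq: "j = n div k" by (simp add: q_def)
          have nn: "n = j*k + n mod k" using jq by simp
          have "dist (g ys j) (g ys (Suc j)) = dist ((f^^(j*k)) x0) ((f^^n) x0)"
            using 2 ys0 by (simp add: g_def)
          also have "\<dots> = dist ((f^^(j*k)) x0) ((f^^(j*k + n mod k)) x0)"
            using nn by metis
          also have "\<dots> \<le> real (n mod k) * c" unfolding c_def by (rule orbit_dist[OF iso])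
          also have "\<dots> \<le> real k * c"
            using k c0 by (intro mult_right_mono) (auto intro: less_imp_le)
          finally show ?thesis using kd c_def by simp
        next
          case 3
          define i where "i = j - q"
          have i: "i < n" using j 3 unfolding i_def by linarith
          have "dist (g ys j) (g ys (Suc j)) = dist ((f^^(n-i)) (ys!i)) ((f^^(n - Suc i)) (ys!Suc i))"
            using 3 by (simp add: g_def i_def Suc_diff_le)
          also have "(f^^(n-i)) (ys!i) = (f^^(n - Suc i)) (f (ys!i))"
            using i by (metis Suc_diff_Suc funpow_simps_right(2) o_apply)
          also have "dist ((f^^(n - Suc i)) (f (ys!i))) ((f^^(n - Suc i)) (ys!Suc i)) = dist (f (ys!i)) (ys!Suc i)"
            by (rule iso_pow[OF iso])
          also have "\<dots> \<le> \<delta>" by (rule ysd[OF i])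
          finally show ?thesis .
        qed
      qed
      thus "dist (id (map (g ys) [0..<Suc (n + q)] ! j)) (map (g ys) [0..<Suc (n + q)] ! Suc j) \<le> \<delta>"
        using j by (simp del: upt_Suc)
    qed simp
  next
    fix xs ys assume xs: "xs \<in> pseudo_orbits f n \<delta> x0" and ys: "ys \<in> pseudo_orbits f n \<delta> x0"
    show "seq_dist n xs ys \<le> seq_dist (n+q) (map (g xs) [0..<Suc (n+q)]) (map (g ys) [0..<Suc (n+q)])"
    proof (rule seq_dist_le)
      fix i assume i: "i \<le> n"
      have "dist (xs!i) (ys!i) = dist (g xs (q+i)) (g ys (q+i))"
        by (simp add: g_def iso_pow[OF iso])
      also have "\<dots> = dist (map (g xs) [0..<Suc (n+q)] ! (q+i)) (map (g ys) [0..<Suc (n+q)] ! (q+i))"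
        using i by (simp del: upt_Suc)
      also have "\<dots> \<le> seq_dist (n+q) (map (g xs) [0..<Suc (n+q)]) (map (g ys) [0..<Suc (n+q)])"
        by (rule seq_dist_ge) (use i in simp)
      finally show "dist (xs!i) (ys!i) \<le> seq_dist (n+q) (map (g xs) [0..<Suc (n+q)]) (map (g ys) [0..<Suc (n+q)])" .
    qed
  qed
  thus "sn (pseudo_orbits f n \<delta> x0) n R \<le> sn (pseudo_orbits id (n + (n div k + 1)) \<delta> x0) (n + (n div k + 1)) R"
    by (simp add: q_def)
qed

lemma ratio_bound:
  fixes n k :: nat
  assumes k: "k \<ge> 1" and nk: "n \<ge> k"
  shows "real (n + (n div k + 1)) / real n \<le> 1 + 2 / real k"
proof -
  have kp: "real k > 0" using k by simp
  have np: "real n > 0" using k nk by simp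
  have "real (n div k) * real k \<le> real n"
  proof -
    have "n div k * k \<le> n" using div_mult_mod_eq[of n k] by linarith
    thus ?thesis by (metis of_nat_le_iff of_nat_mult)
  qed
  hence d: "real (n div k) \<le> real n / real k" using kp by (simp add: field_simps)
  have one: "1 \<le> real n / real k" using nk kp by (simp add: field_simps)
  have "real (n + (n div k + 1)) \<le> real n + real n / real k + real n / real k"
    using d one by simp
  also have "\<dots> = real n * (1 + 2 / real k)" by (simp add: field_simps)
  finally show ?thesis using np by (simp add: field_simps)
qed

lemma A_f_le:
  fixes f :: "'a::metric_space \<Rightarrow> 'a"
  assumes iso: "\<forall>x y. dist (f x) (f y) = dist x y"
    and k: "k \<ge> 1" and kd: "real k * dist x0 (f x0) \<le> \<delta>"
  shows "A f x0 \<delta> R \<le> ereal (1 + 2 / real k) * A id x0 \<delta> R"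
proof -
  define G where "G n = n + (n div k + 1)" for n
  define b where "b m = ereal (1 / real m) * elog (sep_number id m R \<delta> x0)" for m
  define C where "C = 1 + 2 / real k"
  have C0: "C \<ge> 0" unfolding C_def by simp
  have sm: "strict_mono G"
    unfolding G_def by (rule strict_monoI_Suc) (simp add: div_le_mono le_imp_less_Suc)
  have b0: "b m \<ge> 0" for m
    unfolding b_def sep_number_sn by (simp add: elog_ge0)
  have ev: "eventually (\<lambda>n. ereal (1 / real n) * elog (sep_number f n R \<delta> x0) \<le> ereal C * (b \<circ> G) n) sequentially"
    unfolding eventually_sequentially
  proof (intro exI allI impI)
    fix n assume nk: "k \<le> n"
    have np: "real n > 0" using k nk by simp
    have Gp: "real (G n) > 0" unfolding G_def by simp
    have "ereal (1 / real n) * elog (sep_number f n R \<delta> x0) \<le> ereal (1 / real n) * elog (sep_number id (G n) R \<delta> x0)"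
      unfolding G_def sep_number_sn
      by (intro ereal_mult_left_mono elog_mono sn_f_le_id[OF iso k kd, unfolded sep_number_sn]) auto
    also have "ereal (1 / real n) * elog (sep_number id (G n) R \<delta> x0) = ereal (real (G n) / real n) * b (G n)"
    proof -
      have e: "ereal (real (G n) / real n) * ereal (1 / real (G n)) = ereal (1 / real n)"
        using Gp by simp
      show ?thesis unfolding b_def mult.assoc[symmetric] e ..
    qed
    also have "\<dots> \<le> ereal C * b (G n)"
      using ratio_bound[OF k nk] b0 unfolding C_def G_def
      by (intro ereal_mult_right_mono) auto
    finally show "ereal (1 / real n) * elog (sep_number f n R \<delta> x0) \<le> ereal C * (b \<circ> G) n" by simp
  qed
  have "A f x0 \<delta> R \<le> limsup (\<lambda>n. ereal C * (b \<circ> G) n)"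
    unfolding A_def by (rule Limsup_mono[OF ev])
  also have "\<dots> = ereal C * limsup (b \<circ> G)"
    using C0 by (intro Limsup_ereal_mult_left) auto
  also have "\<dots> \<le> ereal C * limsup b"
    using C0 by (intro ereal_mult_left_mono limsup_subseq_mono sm) auto
  finally show ?thesis unfolding A_def b_def C_def .
qed

lemma ce_f_le:
  fixes f :: "'a::metric_space \<Rightarrow> 'a"
  assumes iso: "\<forall>x y. dist (f x) (f y) = dist x y" and k: "k \<ge> 1"
  shows "coarse_entropy f x0 \<le> ereal (1 + 2 / real k) * coarse_entropy id x0"
proof -
  define C where "C = 1 + 2 / real k"
  have Cp: "C > 0" unfolding C_def by (simp add: add_pos_nonneg)
  have B: "(INF R. A f x0 \<delta> R) \<le> ereal C * (INF R. A id x0 \<delta> R)"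
    if kd: "real k * dist x0 (f x0) \<le> \<delta>" for \<delta>
  proof -
    define I where "I = (INF R. A f x0 \<delta> R)"
    have "ereal (1/C) * I \<le> (INF R. A id x0 \<delta> R)"
    proof (rule INF_greatest)
      fix R
      have "I \<le> A f x0 \<delta> R" unfolding I_def by (rule INF_lower) simp
      also have "\<dots> \<le> ereal C * A id x0 \<delta> R" using A_f_le[OF iso k kd] unfolding C_def .
      finally have "ereal (1/C) * I \<le> ereal (1/C) * (ereal C * A id x0 \<delta> R)"
        using Cp by (intro ereal_mult_left_mono) auto
      also have "\<dots> = (ereal (1/C) * ereal C) * A id x0 \<delta> R" by (rule mult.assoc[symmetric])
      also have "ereal (1/C) * ereal C = 1" using Cp by simp
      finally show "ereal (1/C) * I \<le> A id x0 \<delta> R" by (simp only: mult_1)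
    qed
    hence "ereal C * (ereal (1/C) * I) \<le> ereal C * (INF R. A id x0 \<delta> R)"
      using Cp by (intro ereal_mult_left_mono) auto
    also have "ereal C * (ereal (1/C) * I) = (ereal C * ereal (1/C)) * I" by (rule mult.assoc[symmetric])
    also have "ereal C * ereal (1/C) = 1" using Cp by simp
    finally show ?thesis unfolding I_def by (simp only: mult_1)
  qed
  show ?thesis unfolding ce_eq C_def[symmetric]
  proof (rule SUP_least)
    fix \<delta>
    define \<delta>' where "\<delta>' = max \<delta> (real k * dist x0 (f x0))"
    have "(INF R. A f x0 \<delta> R) \<le> (INF R. A f x0 \<delta>' R)"
      by (intro INF_mono') (rule A_mono_d, simp add: \<delta>'_def)
    also have "\<dots> \<le> ereal C * (INF R. A id x0 \<delta>' R)" by (rule B) (simp add: \<delta>'_def)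
    also have "\<dots> \<le> ereal C * (SUP \<delta>. INF R. A id x0 \<delta> R)"
      using Cp by (intro ereal_mult_left_mono SUP_upper) auto
    finally show "(INF R. A f x0 \<delta> R) \<le> ereal C * (SUP \<delta>. INF R. A id x0 \<delta> R)" .
  qed
qed

theorem mainTheorem1:
  fixes f :: "'a::metric_space \<Rightarrow> 'a" and x0 :: 'a
  assumes "\<forall>x y. dist (f x) (f y) = dist x y"
  shows "coarse_entropy f x0 = coarse_entropy id x0"
proof -
  define Hf where "Hf = coarse_entropy f x0"
  define Hi where "Hi = coarse_entropy id x0"
  have le1: "Hi \<le> Hf" unfolding Hf_def Hi_def by (rule ce_id_le_f[OF assms])
  have le2: "\<And>k. k \<ge> 1 \<Longrightarrow> Hf \<le> ereal (1 + 2 / real k) * Hi"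
    unfolding Hf_def Hi_def by (rule ce_f_le[OF assms])
  have "Hf \<le> Hi"
  proof (cases Hi)
    case PInf then show ?thesis by simp
  next
    case MInf
    then show ?thesis using le2[of 1] by simp
  next
    case (real h)
    show ?thesis
    proof (cases Hf)
      case PInf then show ?thesis using le2[of 1] real by simp
    next
      case MInf then show ?thesis by simp
    next
      case (real x)
      note hx = \<open>Hi = ereal h\<close> \<open>Hf = ereal x\<close>
      have xk: "x \<le> (1 + 2 / real k) * h" if "k \<ge> 1" for k
        using le2[OF that] hx by simp
      have "x \<le> h"
      proof (rule ccontr)
        assume "\<not> x \<le> h"
        hence xh: "x > h" by simp
        have hpos: "h > 0"
        proof (rule ccontr)
          assume "\<not> h > 0"
          hence "3 * h \<le> h" by simp
          thus False using xk[of 1] xh by simp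
        qed
        obtain k :: nat where kk: "2 * h / (x - h) < real k" using reals_Archimedean2 by blast
        have k1: "k \<ge> 1"
        proof (rule ccontr)
          assume "\<not> k \<ge> 1" hence "k = 0" by simp
          moreover have "2 * h / (x - h) > 0" using hpos xh by simp
          ultimately show False using kk by simp
        qed
        have "2 * h < real k * (x - h)" using kk xh by (simp add: field_simps)
        hence "(1 + 2 / real k) * h < x" using k1 by (simp add: field_simps)
        thus False using xk[OF k1] by simp
      qed
      then show ?thesis using hx by simp
    qed
  qed
  thus ?thesis using le1 unfolding Hf_def Hi_def by simp
qed

end
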